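(* Let $X$ be a continuous vector field on $\mathbb{S}^1$ of finite width, and let $\lambda^\pm$ be the infinitesimal earthquake measure of $\mathcal{E}_X^\pm$. Then $\lVert\lambda^\pm\rVert_{\mathrm{Th}}\le\frac{2\sqrt2}{1-\tanh(1)}w(X)$.
   Context: $\mathbb{R}^{1,2}$ is $\mathbb{R}^3$ with $\langle x,y\rangle=-x_0y_0+x_1y_1+x_2y_2$; $\mathbb{H}^2$ is identified with the Klein disk $\mathbb{D}^2$ via $\Pi(x_0,x_1,x_2)=(x_1/x_0,x_2/x_0)$, boundary $\mathbb{S}^1$. A vector field $X$ on $\mathbb{S}^1$ is $X(z)=iz\phi_X(z)$. $\phi_X^-(\eta)=\sup\{a(\eta):a\text{ affine},a|_{\mathbb{S}^1}\le\phi_X\}$, $\phi_X^+(\eta)=\inf\{a(\eta):a\text{ affine},a|_{\mathbb{S}^1}\ge\phi_X\}$, $\eta\in\overline{\mathbb{D}^2}$. Width $w(X)=\sup_{\eta\in\mathbb{D}^2}\frac{\phi_X^+(\eta)-\phi_X^-(\eta)}{\sqrt{1-|\eta|^2}}$. $\Sigma^-(\eta)$ is the set of $\sigma\in\mathbb{R}^{1,2}$ with $\langle(1,\xi),\sigma\rangle\le\phi_X^-(\xi)$ for all $\xi\in\mathbb{D}^2$ and equality at $\eta$; $\Sigma^+(\eta)$ likewise with $\ge\phi_X^+$. $\mathcal{E}_X^\pm(\eta)=\mathrm{d}_{(1,\eta)}\Pi((1,\eta)\boxtimes\sigma^\pm(\eta))$, where $\langle x\boxtimes y,v\rangle=\det(x,y,v)$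 and $\sigma^\pm(\eta)$ is the single point or the midpoint of the segment $\Sigma^\pm(\eta)$; these are the left/right infinitesimal earthquakes extending $X$. Their geodesic laminations $\lambda^\pm$ are the connected components of $S^\pm(\sigma)\setminus\mathrm{Int}S^\pm(\sigma)$, $S^\pm(\sigma)=\{\eta\in\mathbb{D}^2:\phi^\pm_X(\eta)=\langle(1,\eta),\sigma\rangle\}$, over all $\sigma$ lying in some $\Sigma^\pm(\eta)$. The infinitesimal earthquake (bending) measure: for an arc $c:[0,1]\to\mathbb{D}^2$, $\lambda^\pm(c)=\inf\sum_{i=0}^{n-1}\sqrt{\langle\sigma_i-\sigma_{i+1},\sigma_i-\sigma_{i+1}\rangle}$ over $0=t_0<\dots<t_n=1$ and $\sigma_i\in\Sigma^\pm(c(t_i))$. Thurston norm $\lVert\lambda\rVert_{\mathrm{Th}}=\sup_I\lambda(I)$ over geodesic segments $I$ of hyperbolic length $1$ transverse to the support of $\lambda$. *)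

theory Defs
  imports "HOL-Analysis.Analysis"
begin

text \<open>Points of R^{1,2} are triples (x0,x1,x2). The Klein disk D^2 and its boundary S^1
  are identified with the unit disk / unit circle in the complex plane (= R^2).\<close>

definition mink :: "real \<times> real \<times> real \<Rightarrow> real \<times> real \<times> real \<Rightarrow> real" where
  "mink x y = - fst x * fst y + fst (snd x) * fst (snd y) + snd (snd x) * snd (snd y)"

definition lift :: "complex \<Rightarrow> real \<times> real \<times> real" where
  "lift \<eta> = (1, Re \<eta>, Im \<eta>)"

definition aff :: "real \<Rightarrow> real \<Rightarrow> real \<Rightarrow> complex \<Rightarrow> real" where
  "aff c p q \<eta> = c + p * Re \<eta> + q * Im \<eta>"

text \<open>A vector field X on S^1, written X(z) = i z \<phi>_X(z) with \<phi>_X real.\<close>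
definition tangent_field :: "(complex \<Rightarrow> complex) \<Rightarrow> bool" where
  "tangent_field X \<longleftrightarrow> (\<forall>z \<in> sphere 0 1. X z / (\<i> * z) \<in> \<real>)"

definition phiX :: "(complex \<Rightarrow> complex) \<Rightarrow> complex \<Rightarrow> real" where
  "phiX X z = Re (X z / (\<i> * z))"

definition phi_minus :: "(complex \<Rightarrow> complex) \<Rightarrow> complex \<Rightarrow> real" where
  "phi_minus X \<eta> = Sup {aff c p q \<eta> | c p q. \<forall>z \<in> sphere 0 1. aff c p q z \<le> phiX X z}"

definition phi_plus :: "(complex \<Rightarrow> complex) \<Rightarrow> complex \<Rightarrow> real" where
  "phi_plus X \<eta> = Inf {aff c p q \<eta> | c p q. \<forall>z \<in> sphere 0 1. aff c p q z \<ge> phiX X z}"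

text \<open>Width w(X) (possibly infinite, hence extended real).\<close>
definition width :: "(complex \<Rightarrow> complex) \<Rightarrow> ereal" where
  "width X = (SUP \<eta> \<in> ball 0 1.
      ereal ((phi_plus X \<eta> - phi_minus X \<eta>) / sqrt (1 - (cmod \<eta>)\<^sup>2)))"

definition Sigma_minus :: "(complex \<Rightarrow> complex) \<Rightarrow> complex \<Rightarrow> (real \<times> real \<times> real) set" where
  "Sigma_minus X \<eta> = {\<sigma>. (\<forall>\<xi> \<in> ball 0 1. mink (lift \<xi>) \<sigma> \<le> phi_minus X \<xi>)
                          \<and> mink (lift \<eta>) \<sigma> = phi_minus X \<eta>}"

definition Sigma_plus :: "(complex \<Rightarrow> complex) \<Rightarrow> complex \<Rightarrow> (real \<times> real \<times> real) set" where
  "Sigma_plus X \<eta> = {\<sigma>. (\<forall>\<xi> \<in> ball 0 1. mink (lift \<xi>) \<sigma> \<ge> phi_plus X \<xi>)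
                          \<and> mink (lift \<eta>) \<sigma> = phi_plus X \<eta>}"

definition Sset :: "(complex \<Rightarrow> real) \<Rightarrow> real \<times> real \<times> real \<Rightarrow> complex set" where
  "Sset \<phi> \<sigma> = {\<eta> \<in> ball 0 1. \<phi> \<eta> = mink (lift \<eta>) \<sigma>}"

definition leaves :: "(complex \<Rightarrow> real) \<Rightarrow> (complex \<Rightarrow> (real \<times> real \<times> real) set) \<Rightarrow> complex set set" where
  "leaves \<phi> \<Sigma> = (\<Union>\<sigma> \<in> (\<Union>\<eta> \<in> ball 0 1. \<Sigma> \<eta>). components (Sset \<phi> \<sigma> - interior (Sset \<phi> \<sigma>)))"

definition lam :: "(complex \<Rightarrow> (real \<times> real \<times> real) set) \<Rightarrow> (real \<Rightarrow> complex) \<Rightarrow> real" where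
  "lam \<Sigma> c = Inf {(\<Sum>i<n. sqrt (mink (\<sigma> i - \<sigma> (Suc i)) (\<sigma> i - \<sigma> (Suc i)))) | n t \<sigma>.
        t 0 = 0 \<and> t n = 1 \<and> (\<forall>i<n. t i < t (Suc i)) \<and> (\<forall>i\<le>n. \<sigma> i \<in> \<Sigma> (c (t i)))}"

text \<open>Hyperbolic distance in the Klein model.\<close>
definition kdist :: "complex \<Rightarrow> complex \<Rightarrow> real" where
  "kdist p q = arcosh ((1 - (Re p * Re q + Im p * Im q)) /
                       sqrt ((1 - (cmod p)\<^sup>2) * (1 - (cmod q)\<^sup>2)))"

text \<open>A set I is transverse to the support of the lamination if it meets every leaf
  in at most one point (geodesic segments in the Klein model are straight segments).\<close>
definition transverse :: "complex set set \<Rightarrow> complex set \<Rightarrow> bool" where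
  "transverse L I \<longleftrightarrow> (\<forall>l \<in> L. \<forall>x \<in> I \<inter> l. \<forall>y \<in> I \<inter> l. x = y)"

text \<open>Thurston norm: sup of \<lambda>(I) over geodesic segments I of hyperbolic length 1
  transverse to the support; I = [p,q] is parametrised by linepath p q on [0,1].\<close>
definition thurston_norm :: "(complex \<Rightarrow> real) \<Rightarrow> (complex \<Rightarrow> (real \<times> real \<times> real) set) \<Rightarrow> ereal" where
  "thurston_norm \<phi> \<Sigma> = (SUP pq \<in> {(p, q). p \<in> ball 0 1 \<and> q \<in> ball 0 1 \<and> kdist p q = 1
                \<and> transverse (leaves \<phi> \<Sigma>) (closed_segment p q)}.
       ereal (lam \<Sigma> (linepath (fst pq) (snd pq))))"

end

theory Submission
  imports Defs
begin

lemma mink_simp: "mink (a,b,c) (d,e,f) = - a*d + b*e + c*f"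
  by (simp add: mink_def)
lemma mink_comm: "mink x y = mink y x"
  by (simp add: mink_def algebra_simps)
lemma mink_add_left: "mink (x+y) z = mink x z + mink y z"
  by (simp add: mink_def algebra_simps)
lemma mink_add_right: "mink z (x+y) = mink z x + mink z y"
  by (simp add: mink_def algebra_simps)
lemma mink_diff_left: "mink (x-y) z = mink x z - mink y z"
  by (simp add: mink_def algebra_simps)
lemma mink_diff_right: "mink z (x-y) = mink z x - mink z y"
  by (simp add: mink_def algebra_simps)
lemma mink_minus_left: "mink (-x) z = - mink x z"
  by (simp add: mink_def algebra_simps)
lemma mink_minus_right: "mink z (-x) = - mink z x"
  by (simp add: mink_def algebra_simps)
lemma mink_scale_left: "mink (r *\<^sub>R x) z = r * mink x z"
  by (simp add: mink_def algebra_simps)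
lemma mink_scale_right: "mink z (r *\<^sub>R x) = r * mink z x"
  by (simp add: mink_def algebra_simps)

lemmas mink_lin = mink_add_left mink_add_right mink_diff_left mink_diff_right
  mink_minus_left mink_minus_right mink_scale_left mink_scale_right

definition pc :: "real \<times> real \<times> real \<Rightarrow> bool" where
  "pc v \<longleftrightarrow> fst v \<le> 0 \<and> (fst (snd v))\<^sup>2 + (snd (snd v))\<^sup>2 \<le> (fst v)\<^sup>2"

lemma cs2: "\<bar>(a::real)*x + b*y\<bar> \<le> sqrt (a\<^sup>2+b\<^sup>2) * sqrt (x\<^sup>2+y\<^sup>2)"
proof -
  have "(a*x+b*y)\<^sup>2 \<le> (a\<^sup>2+b\<^sup>2)*(x\<^sup>2+y\<^sup>2)"
  proof -
    have "(a\<^sup>2+b\<^sup>2)*(x\<^sup>2+y\<^sup>2) - (a*x+b*y)\<^sup>2 = (a*y-b*x)\<^sup>2"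
      by (simp add: power2_eq_square algebra_simps)
    then show ?thesis by (smt (verit) zero_le_power2)
  qed
  then have "sqrt ((a*x+b*y)\<^sup>2) \<le> sqrt ((a\<^sup>2+b\<^sup>2)*(x\<^sup>2+y\<^sup>2))"
    using real_sqrt_le_mono by blast
  then show ?thesis by (simp add: real_sqrt_mult)
qed

lemma cs2_sq: "((a::real)*x + b*y)\<^sup>2 \<le> (a\<^sup>2+b\<^sup>2) * (x\<^sup>2+y\<^sup>2)"
proof -
  have "(a\<^sup>2+b\<^sup>2)*(x\<^sup>2+y\<^sup>2) - (a*x+b*y)\<^sup>2 = (a*y-b*x)\<^sup>2"
    by (simp add: power2_eq_square algebra_simps)
  then show ?thesis by (smt (verit) zero_le_power2)
qed

lemma pcpc: assumes "pc u" "pc v" shows "mink u v \<le> 0"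
proof -
  obtain u0 u1 u2 where u: "u = (u0,u1,u2)" by (cases u) auto
  obtain w0 w1 w2 where v: "v = (w0,w1,w2)" by (cases v) auto
  have h: "u0 \<le> 0" "u1\<^sup>2+u2\<^sup>2 \<le> u0\<^sup>2" "w0 \<le> 0" "w1\<^sup>2+w2\<^sup>2 \<le> w0\<^sup>2"
    using assms by (auto simp: pc_def u v)
  have "(u1*w1+u2*w2)\<^sup>2 \<le> (u1\<^sup>2+u2\<^sup>2)*(w1\<^sup>2+w2\<^sup>2)" by (rule cs2_sq)
  also have "\<dots> \<le> u0\<^sup>2 * w0\<^sup>2"
    using h by (intro mult_mono) auto
  also have "\<dots> = (u0*w0)\<^sup>2" by (simp add: power_mult_distrib)
  finally have "(u1*w1+u2*w2)\<^sup>2 \<le> (u0*w0)\<^sup>2" .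
  moreover have "u0*w0 \<ge> 0" using h by (simp add: mult_nonpos_nonpos)
  ultimately have "u1*w1+u2*w2 \<le> u0*w0"
    using abs_le_square_iff[of "u1*w1+u2*w2" "u0*w0"] by auto
  then show ?thesis by (simp add: u v mink_simp)
qed

lemma pc_self: "pc u \<Longrightarrow> mink u u \<le> 0"
  using pcpc by blast

lemma L1:
  assumes "pc u" "pc v" "pc (u - d)" "pc (v + d)"
  shows "mink d d \<le> - mink (u+v) (u+v)"
proof -
  have "mink u (v+d) \<le> 0" "mink (u-d) v \<le> 0" "mink (u-d) (u-d) \<le> 0" "mink (v+d) (v+d) \<le> 0"
    "mink u u \<le> 0" "mink v v \<le> 0"
    using assms pcpc by auto
  then show ?thesis
    by (simp add: mink_lin mink_comm[of d u] mink_comm[of d v] mink_comm[of v u])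
qed

lemma lift_ball: "\<eta> \<in> ball 0 1 \<Longrightarrow> (Re \<eta>)\<^sup>2 + (Im \<eta>)\<^sup>2 < 1"
  by (simp add: cmod_power2[symmetric] power_less_one_iff abs_less_iff)

lemma cmod_sqrt: "cmod z = sqrt ((Re z)\<^sup>2 + (Im z)\<^sup>2)"
  by (simp add: cmod_def)

lemma mink_lift: "mink (lift z) s = - fst s + Re z * fst (snd s) + Im z * snd (snd s)"
  by (simp add: mink_def lift_def)

lemma circle_max:
  assumes "\<forall>z\<in>sphere 0 1. mink (lift z) s \<le> M"
  shows "- fst s + sqrt ((fst (snd s))\<^sup>2 + (snd (snd s))\<^sup>2) \<le> M"
proof -
  obtain a b c where s: "s = (a,b,c)" by (cases s) auto
  define r where "r = sqrt (b\<^sup>2 + c\<^sup>2)"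
  show ?thesis
  proof (cases "r = 0")
    case True
    have "mink (lift 1) s \<le> M" using assms by auto
    then show ?thesis using True by (simp add: s r_def mink_lift)
  next
    case False
    have "r \<ge> 0" by (simp add: r_def)
    then have rp: "r > 0" using False by linarith
    define z where "z = Complex (b/r) (c/r)"
    have "cmod z = sqrt ((b/r)\<^sup>2 + (c/r)\<^sup>2)" by (simp add: z_def cmod_def)
    also have "\<dots> = sqrt ((b\<^sup>2 + c\<^sup>2)/r\<^sup>2)" by (simp add: power_divide add_divide_distrib)
    also have "\<dots> = 1"
    proof -
      have "b\<^sup>2 + c\<^sup>2 = r\<^sup>2" by (simp add: r_def)
      then show ?thesis using rp by simp
    qed
    finally have "z \<in> sphere 0 1" by simp
    then have "mink (lift z) s \<le> M" using assms by auto
    moreover have "Re z * b + Im z * c = r"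
    proof -
      have "Re z * b + Im z * c = (b\<^sup>2 + c\<^sup>2) / r" by (simp add: z_def power2_eq_square add_divide_distrib)
      also have "\<dots> = r\<^sup>2 / r" by (simp add: r_def)
      also have "\<dots> = r" using rp by (simp add: power2_eq_square)
      finally show ?thesis .
    qed
    ultimately show ?thesis by (simp add: s mink_lift r_def)
  qed
qed

lemma disk_bound:
  assumes "\<forall>z\<in>sphere 0 1. mink (lift z) s \<le> M" "cmod \<eta> \<le> 1"
  shows "mink (lift \<eta>) s \<le> M"
proof -
  have "Re \<eta> * fst (snd s) + Im \<eta> * snd (snd s) \<le> sqrt ((fst (snd s))\<^sup>2 + (snd (snd s))\<^sup>2) * cmod \<eta>"
    using cs2[of "fst (snd s)" "Re \<eta>" "snd (snd s)" "Im \<eta>"] by (simp add: cmod_sqrt mult.commute)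
  also have "\<dots> \<le> sqrt ((fst (snd s))\<^sup>2 + (snd (snd s))\<^sup>2)"
    using assms(2) by (simp add: mult_left_le)
  finally show ?thesis using circle_max[OF assms(1)] by (simp add: mink_lift)
qed

lemma pc_of_circle:
  assumes "\<forall>z\<in>sphere 0 1. mink (lift z) v \<ge> 0"
  shows "pc v"
proof -
  have "\<forall>z\<in>sphere 0 1. mink (lift z) (-v) \<le> 0" using assms by (simp add: mink_minus_right)
  from circle_max[OF this] have "fst v + sqrt ((fst (snd v))\<^sup>2 + (snd (snd v))\<^sup>2) \<le> 0" by simp
  moreover have "sqrt ((fst (snd v))\<^sup>2 + (snd (snd v))\<^sup>2) \<ge> 0" by simp
  ultimately have "fst v \<le> 0" "sqrt ((fst (snd v))\<^sup>2 + (snd (snd v))\<^sup>2) \<le> - fst v" by linarith+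
  then have "(sqrt ((fst (snd v))\<^sup>2 + (snd (snd v))\<^sup>2))\<^sup>2 \<le> (- fst v)\<^sup>2"
    by (intro power_mono) auto
  then show ?thesis using \<open>fst v \<le> 0\<close> by (simp add: pc_def)
qed

lemma FP:
  assumes "pc v" "cmod \<eta> \<le> 1"
  shows "mink (lift \<eta>) v \<ge> 0"
proof -
  have "\<forall>z\<in>sphere 0 1. mink (lift z) (-v) \<le> 0"
  proof
    fix z :: complex assume "z \<in> sphere 0 1"
    then have "cmod z \<le> 1" by simp
    have "Re z * fst (snd v) + Im z * snd (snd v) \<ge> - (sqrt ((fst (snd v))\<^sup>2 + (snd (snd v))\<^sup>2) * cmod z)"
      using cs2[of "fst (snd v)" "Re z" "snd (snd v)" "Im z"] by (simp add: cmod_sqrt mult.commute)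
    moreover have "sqrt ((fst (snd v))\<^sup>2 + (snd (snd v))\<^sup>2) * cmod z \<le> sqrt ((fst (snd v))\<^sup>2 + (snd (snd v))\<^sup>2)"
      using \<open>cmod z \<le> 1\<close> by (simp add: mult_left_le)
    moreover have "sqrt ((fst (snd v))\<^sup>2 + (snd (snd v))\<^sup>2) \<le> sqrt ((fst v)\<^sup>2)"
      using assms(1) real_sqrt_le_mono unfolding pc_def by blast
    moreover have "sqrt ((fst v)\<^sup>2) = - fst v" using assms(1) by (simp add: pc_def)
    ultimately show "mink (lift z) (-v) \<le> 0" by (simp add: mink_lift)
  qed
  from disk_bound[OF this assms(2)] show ?thesis by (simp add: mink_minus_right)
qed

lemma SPL:
  assumes "cmod \<eta> < 1" "cmod \<eta>' < 1" "mink (lift \<eta>) d \<ge> 0" "mink (lift \<eta>') d \<le> 0"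
  shows "mink d d \<ge> 0"
proof (rule ccontr)
  assume neg: "\<not> mink d d \<ge> 0"
  obtain a b c where d: "d = (a,b,c)" by (cases d) auto
  define r where "r = sqrt (b\<^sup>2 + c\<^sup>2)"
  have "b\<^sup>2 + c\<^sup>2 < a\<^sup>2" using neg by (simp add: d mink_simp power2_eq_square)
  then have ra: "r < \<bar>a\<bar>" unfolding r_def by (metis real_sqrt_abs real_sqrt_less_iff)
  have r0: "r \<ge> 0" by (simp add: r_def)
  have b1: "\<bar>Re x * b + Im x * c\<bar> \<le> r" if "cmod x < 1" for x
  proof -
    have "\<bar>b * Re x + c * Im x\<bar> \<le> r * cmod x" using cs2[of b "Re x" c "Im x"] by (simp add: r_def cmod_sqrt)
    also have "\<dots> \<le> r" using that r0 by (simp add: mult_left_le)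
    finally show ?thesis by (simp add: mult.commute)
  qed
  have e1: "- a + (Re \<eta> * b + Im \<eta> * c) \<ge> 0" using assms(3) by (simp add: d mink_lift)
  have e2: "- a + (Re \<eta>' * b + Im \<eta>' * c) \<le> 0" using assms(4) by (simp add: d mink_lift)
  show False using b1[OF assms(1)] b1[OF assms(2)] e1 e2 ra by linarith
qed

lemma RCS:
  assumes "cmod \<eta> < 1"
  shows "(mink (lift \<eta>) x)\<^sup>2 \<ge> - (1 - (cmod \<eta>)\<^sup>2) * mink x x"
proof -
  obtain x0 x1 x2 where x: "x = (x0,x1,x2)" by (cases x) auto
  define a where "a = Re \<eta>"
  define b where "b = Im \<eta>"
  define k where "k = 1 - a\<^sup>2 - b\<^sup>2"
  have k: "k > 0" using lift_ball[of \<eta>] assms by (simp add: k_def a_def b_def)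
  define B where "B = -x0 + a*x1 + b*x2"
  define C where "C = -x0\<^sup>2 + x1\<^sup>2 + x2\<^sup>2"
  have id: "B\<^sup>2 + k*C = (B + k*x0)\<^sup>2 + k*((x1 - x0*a)\<^sup>2 + (x2-x0*b)\<^sup>2)"
    unfolding B_def C_def k_def by (simp add: power2_eq_square algebra_simps)
  have "0 \<le> k*((x1 - x0*a)\<^sup>2 + (x2-x0*b)\<^sup>2)" using k by simp
  then have "B\<^sup>2 + k*C \<ge> 0" using id by (smt (verit) zero_le_power2)
  moreover have "mink (lift \<eta>) x = B" by (simp add: x mink_lift B_def a_def b_def)
  moreover have "mink x x = C" by (simp add: x mink_simp C_def power2_eq_square)
  moreover have "1 - (cmod \<eta>)\<^sup>2 = k" by (simp add: k_def a_def b_def cmod_power2)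
  ultimately show ?thesis by simp
qed


lemma mink_lift_lift: "mink (lift p) (lift q) = -(1 - (Re p * Re q + Im p * Im q))"
  by (simp add: mink_def lift_def)

lemma mink_lift_self: "mink (lift p) (lift p) = -(1 - (cmod p)\<^sup>2)"
  unfolding mink_def lift_def using cmod_power2[of p] by (simp add: power2_eq_square)

lemma kd_facts:
  assumes p: "cmod p < 1" and q: "cmod q < 1" and k: "kdist p q = 1"
  defines "Sp \<equiv> sqrt (1 - (cmod p)\<^sup>2)" and "Sq \<equiv> sqrt (1 - (cmod q)\<^sup>2)"
  obtains c where "1 \<le> c" "c \<le> 2" "mink (lift p) (lift q) = - c * Sp * Sq"
proof -
  define N where "N = 1 - (Re p * Re q + Im p * Im q)"
  have p2: "(cmod p)\<^sup>2 < 1" using p by (simp add: power_less_one_iff abs_less_iff)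
  have q2: "(cmod q)\<^sup>2 < 1" using q by (simp add: power_less_one_iff abs_less_iff)
  have Spp: "Sp > 0" using p2 by (simp add: Sp_def)
  have Sqp: "Sq > 0" using q2 by (simp add: Sq_def)
  have "\<bar>Re p * Re q + Im p * Im q\<bar> \<le> cmod p * cmod q"
    using cs2[of "Re p" "Re q" "Im p" "Im q"] by (simp add: cmod_sqrt)
  also have "\<dots> \<le> cmod p" using q by (simp add: mult_left_le)
  also have "\<dots> < 1" using p by simp
  finally have Np: "N > 0" by (simp add: N_def)
  have "(mink (lift p) (lift q))\<^sup>2 \<ge> - (1 - (cmod p)\<^sup>2) * mink (lift q) (lift q)"
    by (rule RCS[OF p])
  moreover have "mink (lift q) (lift q) = -(1 - (cmod q)\<^sup>2)" by (rule mink_lift_self)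
  moreover have "mink (lift p) (lift q) = - N" by (simp add: mink_lift_lift N_def)
  ultimately have "N\<^sup>2 \<ge> (1 - (cmod p)\<^sup>2) * (1 - (cmod q)\<^sup>2)"
    by (simp add: algebra_simps)
  also have "(1 - (cmod p)\<^sup>2) * (1 - (cmod q)\<^sup>2) = (Sp * Sq)\<^sup>2"
    using p2 q2 by (simp add: Sp_def Sq_def power_mult_distrib)
  finally have "Sp * Sq \<le> N" using Np Spp Sqp
    by (metis abs_le_square_iff abs_of_pos mult_pos_pos)
  define c where "c = N / (Sp * Sq)"
  have c1: "c \<ge> 1" using \<open>Sp * Sq \<le> N\<close> Spp Sqp by (simp add: c_def)
  have "kdist p q = arcosh c"
    by (simp add: kdist_def c_def N_def Sp_def Sq_def real_sqrt_mult)
  then have "arcosh c = 1" using k by simp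
  then have "cosh 1 = c" using c1 cosh_arcosh_real by metis
  moreover have "cosh (1::real) \<le> 2"
  proof -
    have a: "exp (1::real) \<le> 3" by (rule exp_le)
    have b: "exp (-1::real) \<le> 1" by simp
    have c: "cosh (1::real) = (exp 1 + exp (-1))/2" by (simp add: cosh_def)
    have "(exp 1 + exp (-1))/2 \<le> (2::real)" using add_mono[OF a b] by simp
    then show ?thesis using c by simp
  qed
  ultimately have c2: "c \<le> 2" by simp
  have "mink (lift p) (lift q) = - c * Sp * Sq"
    using Spp Sqp by (simp add: mink_lift_lift c_def N_def)
  then show ?thesis using that c1 c2 by blast
qed

lemma harnack:
  assumes p: "cmod p < 1" and q: "cmod q < 1" and k: "kdist p q = 1" and v: "pc v"
  defines "Sp \<equiv> sqrt (1 - (cmod p)\<^sup>2)" and "Sq \<equiv> sqrt (1 - (cmod q)\<^sup>2)"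
  shows "Sq * mink (lift p) v \<le> 4 * Sp * mink (lift q) v"
proof -
  obtain c where c1: "1 \<le> c" and c2: "c \<le> 2" and cpq: "mink (lift p) (lift q) = - c * Sp * Sq"
    using kd_facts[OF p q k] unfolding Sp_def Sq_def by blast
  have p2: "(cmod p)\<^sup>2 < 1" using p by (simp add: power_less_one_iff abs_less_iff)
  have q2: "(cmod q)\<^sup>2 < 1" using q by (simp add: power_less_one_iff abs_less_iff)
  have Spp: "Sp > 0" using p2 by (simp add: Sp_def)
  have Sqp: "Sq > 0" using q2 by (simp add: Sq_def)
  have pp: "mink (lift p) (lift p) = - Sp\<^sup>2" using p2 by (simp add: mink_lift_self Sp_def)
  have qq: "mink (lift q) (lift q) = - Sq\<^sup>2" using q2 by (simp add: mink_lift_self Sq_def)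
  define Z where "Z = Sp *\<^sub>R lift q - (Sq/4) *\<^sub>R lift p"
  have "mink Z Z = (Sp * Sq)\<^sup>2 * (c/2 - 17/16)"
    unfolding Z_def using pp qq cpq
    by (simp add: mink_lin mink_comm[of "lift q" "lift p"] power2_eq_square algebra_simps)
  also have "\<dots> \<le> 0" using c2 by (intro mult_nonneg_nonpos) auto
  finally have ZZ: "mink Z Z \<le> 0" .
  have "mink Z (lift p) = Sp\<^sup>2 * Sq * (1/4 - c)"
    unfolding Z_def using pp qq cpq
    by (simp add: mink_lin mink_comm[of "lift q" "lift p"] power2_eq_square algebra_simps)
  also have "\<dots> < 0" using c1 Spp Sqp by (intro mult_pos_neg) auto
  finally have Zp: "mink Z (lift p) < 0" .
  have pcZ: "pc (-Z)"
  proof -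
    obtain z0 z1 z2 where z: "Z = (z0,z1,z2)" by (cases Z) auto
    have Sq: "z1\<^sup>2 + z2\<^sup>2 \<le> z0\<^sup>2" using ZZ by (simp add: z mink_simp power2_eq_square)
    have "z0 \<ge> 0"
    proof (rule ccontr)
      assume "\<not> z0 \<ge> 0"
      then have "pc Z" using Sq by (simp add: pc_def z)
      then have "mink (lift p) Z \<ge> 0" using FP p by simp
      then show False using Zp mink_comm by (metis not_le)
    qed
    then show ?thesis using Sq by (simp add: pc_def z)
  qed
  have "mink (-Z) v \<le> 0" by (rule pcpc[OF pcZ v])
  then have "mink Z v \<ge> 0" by (simp add: mink_minus_left)
  then show ?thesis unfolding Z_def by (simp add: mink_lin algebra_simps)
qed

lemma L2:
  assumes p: "cmod p < 1" and q: "cmod q < 1" and k: "kdist p q = 1" and u: "pc u" and v: "pc v"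
    and hu: "mink (lift p) u \<le> W * sqrt (1 - (cmod p)\<^sup>2)"
    and hv: "mink (lift q) v \<le> W * sqrt (1 - (cmod q)\<^sup>2)"
  shows "- mink (u+v) (u+v) \<le> 25 * W\<^sup>2"
proof -
  define Sp where "Sp = sqrt (1 - (cmod p)\<^sup>2)"
  define Sq where "Sq = sqrt (1 - (cmod q)\<^sup>2)"
  have p2: "(cmod p)\<^sup>2 < 1" using p by (simp add: power_less_one_iff abs_less_iff)
  have q2: "(cmod q)\<^sup>2 < 1" using q by (simp add: power_less_one_iff abs_less_iff)
  have Spp: "Sp > 0" using p2 by (simp add: Sp_def)
  have Sqp: "Sq > 0" using q2 by (simp add: Sq_def)
  have A0: "mink (lift p) u \<ge> 0" using FP[OF u] p by simp
  have B0: "mink (lift p) v \<ge> 0" using FP[OF v] p by simp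
  have H: "Sq * mink (lift p) v \<le> 4 * Sp * mink (lift q) v"
    using harnack[OF p q k v] by (simp add: Sp_def Sq_def)
  also have "\<dots> \<le> 4 * Sp * (W * Sq)" using hv Spp by (simp add: Sq_def)
  finally have "Sq * mink (lift p) v \<le> Sq * (4 * Sp * W)" by (simp add: algebra_simps)
  then have B: "mink (lift p) v \<le> 4 * Sp * W" using Sqp by simp
  have S: "mink (lift p) (u+v) \<le> 5 * W * Sp" using B hu by (simp add: mink_lin Sp_def algebra_simps)
  have S0: "mink (lift p) (u+v) \<ge> 0" using A0 B0 by (simp add: mink_lin)
  have "(mink (lift p) (u+v))\<^sup>2 \<le> (5 * W * Sp)\<^sup>2" using S S0 by (intro power_mono) auto
  moreover have "(mink (lift p) (u+v))\<^sup>2 \<ge> - (1 - (cmod p)\<^sup>2) * mink (u+v) (u+v)" by (rule RCS[OF p])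
  moreover have "1 - (cmod p)\<^sup>2 = Sp\<^sup>2" using p2 by (simp add: Sp_def)
  ultimately have "Sp\<^sup>2 * (- mink (u+v) (u+v)) \<le> Sp\<^sup>2 * (25 * W\<^sup>2)"
    by (simp add: power_mult_distrib algebra_simps)
  moreover have "Sp\<^sup>2 > 0" using Spp by simp
  ultimately show ?thesis using mult_le_cancel_left_pos by blast
qed


definition Fset :: "(complex \<Rightarrow> real) \<Rightarrow> (real \<times> real \<times> real) set" where
  "Fset f = {\<sigma>. \<forall>z\<in>sphere 0 1. mink (lift z) \<sigma> \<le> f z}"

lemma cont_mink_lift: "continuous_on A (\<lambda>\<sigma>. mink (lift z) \<sigma>)"
  unfolding mink_lift by (intro continuous_intros)

lemma closed_Fset: "closed (Fset f)"
proof -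
  have "Fset f = (\<Inter>z\<in>sphere 0 1. {\<sigma>. mink (lift z) \<sigma> \<le> f z})"
    by (auto simp: Fset_def)
  moreover have "closed {\<sigma>. mink (lift z) \<sigma> \<le> f z}" for z
    by (rule closed_Collect_le) (auto intro: cont_mink_lift)
  ultimately show ?thesis by auto
qed

lemma Fset_le:
  assumes "\<forall>z\<in>sphere 0 1. \<bar>f z\<bar> \<le> M" "\<sigma> \<in> Fset f" "cmod \<eta> \<le> 1"
  shows "mink (lift \<eta>) \<sigma> \<le> M"
proof -
  have "\<forall>z\<in>sphere 0 1. mink (lift z) \<sigma> \<le> M"
  proof
    fix z :: complex assume z: "z \<in> sphere 0 1"
    then have "mink (lift z) \<sigma> \<le> f z" "f z \<le> M" using assms(1,2) by (auto simp: Fset_def abs_le_iff)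
    then show "mink (lift z) \<sigma> \<le> M" by linarith
  qed
  then show ?thesis using disk_bound assms(3) by blast
qed

lemma Fset_attain:
  assumes M: "\<forall>z\<in>sphere 0 1. \<bar>f z\<bar> \<le> M" and eta: "cmod \<eta> < 1"
  shows "bdd_above ((\<lambda>\<sigma>. mink (lift \<eta>) \<sigma>) ` Fset f)"
    and "\<exists>\<sigma>\<in>Fset f. mink (lift \<eta>) \<sigma> = Sup ((\<lambda>\<sigma>. mink (lift \<eta>) \<sigma>) ` Fset f)"
proof -
  let ?g = "\<lambda>\<sigma>. mink (lift \<eta>) \<sigma>"
  show bdd: "bdd_above (?g ` Fset f)"
    using Fset_le[OF M _] eta by (intro bdd_aboveI[of _ M]) auto
  have M0: "M \<ge> 0" using M[rule_format, of 1] by simp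
  define \<sigma>0 where "\<sigma>0 = (M, 0::real, 0::real)"
  have s0: "\<sigma>0 \<in> Fset f" using M unfolding Fset_def \<sigma>0_def
    by (auto simp: mink_lift abs_le_iff)
  have gs0: "?g \<sigma>0 = - M" by (simp add: \<sigma>0_def mink_lift)
  define K where "K = Fset f \<inter> {\<sigma>. - M \<le> ?g \<sigma>}"
  have "closed K" unfolding K_def
    by (intro closed_Int closed_Fset closed_Collect_le) (auto intro: cont_mink_lift)
  moreover have "bounded K"
  proof -
    define R where "R = 2*M / (1 - cmod \<eta>)"
    have R0: "R \<ge> 0" using eta M0 by (simp add: R_def)
    have "norm \<sigma> \<le> M + 3*R" if "\<sigma> \<in> K" for \<sigma>
    proof -
      obtain a b c where s: "\<sigma> = (a,b,c)" by (cases \<sigma>) auto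
      define r where "r = sqrt (b\<^sup>2 + c\<^sup>2)"
      have "\<sigma> \<in> Fset f" using that by (simp add: K_def)
      then have "\<forall>z\<in>sphere 0 1. mink (lift z) \<sigma> \<le> M"
        using Fset_le[OF M] by auto
      from circle_max[OF this] have h1: "- a + r \<le> M" by (simp add: s r_def)
      have h2: "- M \<le> - a + (Re \<eta> * b + Im \<eta> * c)" using that by (simp add: K_def s mink_lift)
      have "\<bar>b * Re \<eta> + c * Im \<eta>\<bar> \<le> r * cmod \<eta>" using cs2[of b "Re \<eta>" c "Im \<eta>"] by (simp add: r_def cmod_sqrt)
      then have h3: "Re \<eta> * b + Im \<eta> * c \<le> r * cmod \<eta>" by (simp add: mult.commute)
      have r0: "r \<ge> 0" by (simp add: r_def)
      have "r * (1 - cmod \<eta>) \<le> 2 * M" using h1 h2 h3 by (simp add: algebra_simps)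
      then have rR: "r \<le> R" using eta by (simp add: R_def pos_le_divide_eq)
      have rc: "r * cmod \<eta> \<le> r" using r0 eta by (simp add: mult_left_le)
      have "sqrt (b\<^sup>2) \<le> r" unfolding r_def by (rule real_sqrt_le_mono) simp
      then have ba: "\<bar>b\<bar> \<le> r" by simp
      have "sqrt (c\<^sup>2) \<le> r" unfolding r_def by (rule real_sqrt_le_mono) simp
      then have ca: "\<bar>c\<bar> \<le> r" by simp
      have aa: "\<bar>a\<bar> \<le> M + R" using h1 h2 h3 rc rR r0 by linarith
      have "norm \<sigma> \<le> norm a + norm (b,c)" unfolding s by (rule norm_Pair_le)
      also have "norm (b,c) \<le> norm b + norm c" by (rule norm_Pair_le)
      finally show ?thesis using aa ba ca rR by simp
    qed
    then show ?thesis unfolding bounded_iff by blast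
  qed
  ultimately have "compact K" by (simp add: compact_eq_bounded_closed)
  moreover have "K \<noteq> {}" using s0 gs0 unfolding K_def by auto
  moreover have "continuous_on K ?g" by (rule cont_mink_lift)
  ultimately obtain \<sigma>1 where s1: "\<sigma>1 \<in> K" and mx: "\<forall>y\<in>K. ?g y \<le> ?g \<sigma>1"
    using continuous_attains_sup by blast
  have s1F: "\<sigma>1 \<in> Fset f" using s1 by (simp add: K_def)
  have "\<forall>y\<in>Fset f. ?g y \<le> ?g \<sigma>1"
  proof
    fix y assume y: "y \<in> Fset f"
    show "?g y \<le> ?g \<sigma>1"
    proof (cases "y \<in> K")
      case True then show ?thesis using mx by blast
    next
      case False
      then have "?g y < - M" using y by (auto simp: K_def)
      also have "- M \<le> ?g \<sigma>1" using mx s0 gs0 unfolding K_def by force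
      finally show ?thesis by simp
    qed
  qed
  then have "Sup (?g ` Fset f) = ?g \<sigma>1"
    by (intro cSup_eq_maximum) (use s1F in auto)
  then show "\<exists>\<sigma>\<in>Fset f. ?g \<sigma> = Sup (?g ` Fset f)" using s1F by auto
qed


lemma aff_mink: "aff c p q \<xi> = mink (lift \<xi>) (-c, p, q)"
  by (simp add: aff_def mink_lift)

lemma phiX_bounded:
  assumes "continuous_on (sphere 0 1) X"
  shows "\<exists>M. \<forall>z\<in>sphere 0 1. \<bar>phiX X z\<bar> \<le> M"
proof -
  have "continuous_on (sphere 0 1) (phiX X)"
    unfolding phiX_def using assms by (intro continuous_intros) auto
  then have "compact (phiX X ` sphere 0 1)" by (intro compact_continuous_image) auto
  then have "bounded (phiX X ` sphere 0 1)" by (rule compact_imp_bounded)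
  then obtain B where "\<forall>x\<in>phiX X ` sphere 0 1. norm x \<le> B" unfolding bounded_iff by blast
  then show ?thesis by auto
qed

lemma phi_minus_eq:
  "phi_minus X \<eta> = Sup ((\<lambda>\<sigma>. mink (lift \<eta>) \<sigma>) ` Fset (phiX X))"
proof -
  have "{aff c p q \<eta> | c p q. \<forall>z \<in> sphere 0 1. aff c p q z \<le> phiX X z}
        = (\<lambda>\<sigma>. mink (lift \<eta>) \<sigma>) ` Fset (phiX X)"
  proof (intro equalityI subsetI)
    fix x assume "x \<in> {aff c p q \<eta> | c p q. \<forall>z \<in> sphere 0 1. aff c p q z \<le> phiX X z}"
    then obtain c p q where "x = aff c p q \<eta>" "\<forall>z \<in> sphere 0 1. aff c p q z \<le> phiX X z" by blast
    then show "x \<in> (\<lambda>\<sigma>. mink (lift \<eta>) \<sigma>) ` Fset (phiX X)"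
      by (intro image_eqI[of _ _ "(-c,p,q)"]) (auto simp: Fset_def aff_mink)
  next
    fix x assume "x \<in> (\<lambda>\<sigma>. mink (lift \<eta>) \<sigma>) ` Fset (phiX X)"
    then obtain a b c where "x = mink (lift \<eta>) (a,b,c)" "(a,b,c) \<in> Fset (phiX X)" by auto
    then show "x \<in> {aff c p q \<eta> | c p q. \<forall>z \<in> sphere 0 1. aff c p q z \<le> phiX X z}"
      by (intro CollectI exI[of _ "-a"] exI[of _ b] exI[of _ c]) (auto simp: Fset_def aff_mink)
  qed
  then show ?thesis by (simp add: phi_minus_def)
qed

definition Gset :: "(complex \<Rightarrow> real) \<Rightarrow> (real \<times> real \<times> real) set" where
  "Gset f = {\<sigma>. \<forall>z\<in>sphere 0 1. mink (lift z) \<sigma> \<ge> f z}"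

lemma Gset_Fset: "\<sigma> \<in> Gset f \<longleftrightarrow> -\<sigma> \<in> Fset (\<lambda>z. - f z)"
  by (simp add: Gset_def Fset_def mink_minus_right)

lemma phi_plus_eq:
  "phi_plus X \<eta> = - Sup ((\<lambda>\<sigma>. mink (lift \<eta>) \<sigma>) ` Fset (\<lambda>z. - phiX X z))"
proof -
  have "uminus ` {aff c p q \<eta> | c p q. \<forall>z \<in> sphere 0 1. aff c p q z \<ge> phiX X z}
        = (\<lambda>\<sigma>. mink (lift \<eta>) \<sigma>) ` Fset (\<lambda>z. - phiX X z)"
  proof (intro equalityI subsetI)
    fix x assume "x \<in> uminus ` {aff c p q \<eta> | c p q. \<forall>z \<in> sphere 0 1. aff c p q z \<ge> phiX X z}"
    then obtain c p q where h: "x = - aff c p q \<eta>" "\<forall>z \<in> sphere 0 1. aff c p q z \<ge> phiX X z" by blast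
    have "(c,-p,-q) \<in> Fset (\<lambda>z. - phiX X z)"
      unfolding Fset_def
    proof (intro CollectI ballI)
      fix z :: complex assume "z \<in> sphere 0 1"
      then have "aff c p q z \<ge> phiX X z" using h(2) by blast
      then show "mink (lift z) (c,-p,-q) \<le> - phiX X z" by (simp add: aff_def mink_lift algebra_simps)
    qed
    then show "x \<in> (\<lambda>\<sigma>. mink (lift \<eta>) \<sigma>) ` Fset (\<lambda>z. - phiX X z)"
      using h(1) by (intro image_eqI[of _ _ "(c,-p,-q)"]) (auto simp: aff_def mink_lift)
  next
    fix x assume "x \<in> (\<lambda>\<sigma>. mink (lift \<eta>) \<sigma>) ` Fset (\<lambda>z. - phiX X z)"
    then obtain a b c where h: "x = mink (lift \<eta>) (a,b,c)" "(a,b,c) \<in> Fset (\<lambda>z. - phiX X z)" by auto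
    have "\<forall>z \<in> sphere 0 1. aff a (-b) (-c) z \<ge> phiX X z"
    proof
      fix z :: complex assume "z \<in> sphere 0 1"
      then have "mink (lift z) (a,b,c) \<le> - phiX X z" using h(2) by (auto simp: Fset_def)
      then show "aff a (-b) (-c) z \<ge> phiX X z" by (simp add: aff_def mink_lift algebra_simps)
    qed
    then have "aff a (-b) (-c) \<eta> \<in> {aff c p q \<eta> | c p q. \<forall>z \<in> sphere 0 1. aff c p q z \<ge> phiX X z}"
      by blast
    moreover have "x = - aff a (-b) (-c) \<eta>" using h(1) by (simp add: aff_def mink_lift)
    ultimately show "x \<in> uminus ` {aff c p q \<eta> | c p q. \<forall>z \<in> sphere 0 1. aff c p q z \<ge> phiX X z}"
      by blast
  qed
  then show ?thesis by (simp add: phi_plus_def Inf_real_def)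
qed

locale vf =
  fixes X :: "complex \<Rightarrow> complex"
  assumes cont: "continuous_on (sphere 0 1) X"
begin

lemma bnd: obtains M where "\<forall>z\<in>sphere 0 1. \<bar>phiX X z\<bar> \<le> M"
  using phiX_bounded[OF cont] by blast

lemma PM1: "cmod \<eta> < 1 \<Longrightarrow> \<sigma> \<in> Fset (phiX X) \<Longrightarrow> mink (lift \<eta>) \<sigma> \<le> phi_minus X \<eta>"
  unfolding phi_minus_eq using Fset_attain(1) bnd by (metis cSup_upper imageI)

lemma PM2: "cmod \<eta> < 1 \<Longrightarrow> \<exists>\<sigma>\<in>Fset (phiX X). mink (lift \<eta>) \<sigma> = phi_minus X \<eta>"
  unfolding phi_minus_eq using Fset_attain(2) bnd by metis

lemma bnd2: obtains M where "\<forall>z\<in>sphere 0 1. \<bar>- phiX X z\<bar> \<le> M"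
  using bnd by auto

lemma PP1: assumes "cmod \<eta> < 1" "\<sigma> \<in> Gset (phiX X)" shows "mink (lift \<eta>) \<sigma> \<ge> phi_plus X \<eta>"
proof -
  have "-\<sigma> \<in> Fset (\<lambda>z. - phiX X z)" using assms(2) Gset_Fset by blast
  then have "mink (lift \<eta>) (-\<sigma>) \<le> Sup ((\<lambda>\<sigma>. mink (lift \<eta>) \<sigma>) ` Fset (\<lambda>z. - phiX X z))"
    using Fset_attain(1)[OF _ assms(1)] bnd2 by (metis cSup_upper imageI)
  then show ?thesis unfolding phi_plus_eq by (simp add: mink_minus_right)
qed

lemma PP2: assumes "cmod \<eta> < 1" shows "\<exists>\<sigma>\<in>Gset (phiX X). mink (lift \<eta>) \<sigma> = phi_plus X \<eta>"
proof -
  obtain \<sigma> where "\<sigma> \<in> Fset (\<lambda>z. - phiX X z)"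
    "mink (lift \<eta>) \<sigma> = Sup ((\<lambda>\<sigma>. mink (lift \<eta>) \<sigma>) ` Fset (\<lambda>z. - phiX X z))"
    using Fset_attain(2)[OF _ assms(1)] bnd2 by metis
  then show ?thesis unfolding phi_plus_eq
    by (intro bexI[of _ "-\<sigma>"]) (auto simp: Gset_Fset mink_minus_right)
qed

lemma SigM: "cmod \<eta> < 1 \<Longrightarrow> \<sigma> \<in> Fset (phiX X) \<Longrightarrow> mink (lift \<eta>) \<sigma> = phi_minus X \<eta>
   \<Longrightarrow> \<sigma> \<in> Sigma_minus X \<eta>"
  unfolding Sigma_minus_def using PM1 by auto

lemma SigP: "cmod \<eta> < 1 \<Longrightarrow> \<sigma> \<in> Gset (phiX X) \<Longrightarrow> mink (lift \<eta>) \<sigma> = phi_plus X \<eta>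
   \<Longrightarrow> \<sigma> \<in> Sigma_plus X \<eta>"
  unfolding Sigma_plus_def using PP1 by auto

end

lemma pc_GF: assumes "a \<in> Fset f" "b \<in> Gset f" shows "pc (b - a)"
proof (rule pc_of_circle, intro ballI)
  fix z :: complex assume "z \<in> sphere 0 1"
  then have "mink (lift z) a \<le> f z" "mink (lift z) b \<ge> f z" using assms by (auto simp: Fset_def Gset_def)
  then show "mink (lift z) (b - a) \<ge> 0" by (simp add: mink_lin)
qed


lemma t_mono:
  assumes "\<forall>i<n. (t::nat\<Rightarrow>real) i < t (Suc i)" "i \<le> j" "j \<le> n"
  shows "t i \<le> t j"
  using assms(2,3)
proof (induction j)
  case 0 then show ?case by simp
next
  case (Suc j)
  show ?case
  proof (cases "i = Suc j")
    case True then show ?thesis by simp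
  next
    case False
    then have "i \<le> j" using Suc.prems by simp
    then have "t i \<le> t j" using Suc by simp
    also have "t j < t (Suc j)" using assms(1) Suc.prems by simp
    finally show ?thesis by simp
  qed
qed

lemma lam_bound:
  assumes sp: "\<forall>\<eta>\<in>ball 0 1. \<forall>\<eta>'\<in>ball 0 1. \<forall>\<sigma>\<in>\<Sigma> \<eta>. \<forall>\<tau>\<in>\<Sigma> \<eta>'. mink (\<sigma>-\<tau>) (\<sigma>-\<tau>) \<ge> 0"
    and p: "p \<in> ball 0 1" and q: "q \<in> ball 0 1"
    and sp0: "\<sigma>p \<in> \<Sigma> p" and sq0: "\<sigma>q \<in> \<Sigma> q"
    and B: "sqrt (mink (\<sigma>p-\<sigma>q) (\<sigma>p-\<sigma>q)) \<le> B"
  shows "lam \<Sigma> (linepath p q) \<le> B"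
  unfolding lam_def
proof (rule cInf_lower2)
  define t :: "nat \<Rightarrow> real" where "t = (\<lambda>i. if i = 0 then 0 else 1)"
  define \<sigma> where "\<sigma> = (\<lambda>i::nat. if i = 0 then \<sigma>p else \<sigma>q)"
  have "(\<Sum>i<1. sqrt (mink (\<sigma> i - \<sigma> (Suc i)) (\<sigma> i - \<sigma> (Suc i)))) = sqrt (mink (\<sigma>p-\<sigma>q) (\<sigma>p-\<sigma>q))"
    by (simp add: \<sigma>_def)
  moreover have "t 0 = 0 \<and> t 1 = 1 \<and> (\<forall>i<1. t i < t (Suc i)) \<and> (\<forall>i\<le>1. \<sigma> i \<in> \<Sigma> (linepath p q (t i)))"
  proof -
    have "\<forall>i\<le>(1::nat). i = 0 \<or> i = 1" by auto
    then show ?thesis using sp0 sq0 by (auto simp: t_def \<sigma>_def linepath_def)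
  qed
  ultimately show "sqrt (mink (\<sigma>p-\<sigma>q) (\<sigma>p-\<sigma>q)) \<in> {(\<Sum>i<n. sqrt (mink (\<sigma> i - \<sigma> (Suc i)) (\<sigma> i - \<sigma> (Suc i)))) | n t \<sigma>.
        t 0 = 0 \<and> t n = 1 \<and> (\<forall>i<n. t i < t (Suc i)) \<and> (\<forall>i\<le>n. \<sigma> i \<in> \<Sigma> (linepath p q (t i)))}"
    apply (intro CollectI exI[of _ "1::nat"] exI[of _ t] exI[of _ \<sigma>])
    by argo
  show "sqrt (mink (\<sigma>p-\<sigma>q) (\<sigma>p-\<sigma>q)) \<le> B" by (rule B)
  show "bdd_below {(\<Sum>i<n. sqrt (mink (\<sigma> i - \<sigma> (Suc i)) (\<sigma> i - \<sigma> (Suc i)))) | n t \<sigma>.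
        t 0 = 0 \<and> t n = 1 \<and> (\<forall>i<n. t i < t (Suc i)) \<and> (\<forall>i\<le>n. \<sigma> i \<in> \<Sigma> (linepath p q (t i)))}"
  proof (rule bdd_belowI[of _ 0])
    fix x assume "x \<in> {(\<Sum>i<n. sqrt (mink (\<sigma> i - \<sigma> (Suc i)) (\<sigma> i - \<sigma> (Suc i)))) | n t \<sigma>.
        t 0 = 0 \<and> t n = 1 \<and> (\<forall>i<n. t i < t (Suc i)) \<and> (\<forall>i\<le>n. \<sigma> i \<in> \<Sigma> (linepath p q (t i)))}"
    then obtain n t \<sigma> where x: "x = (\<Sum>i<n. sqrt (mink (\<sigma> i - \<sigma> (Suc i)) (\<sigma> i - \<sigma> (Suc i))))"
      and t0: "t 0 = 0" and tn: "t n = 1" and tm: "\<forall>i<n. t i < t (Suc i)"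
      and s: "\<forall>i\<le>n. \<sigma> i \<in> \<Sigma> (linepath p q (t i))" by blast
    have inb: "linepath p q (t i) \<in> ball 0 1" if "i \<le> n" for i
    proof -
      have "t 0 \<le> t i" "t i \<le> t n" using t_mono[OF tm] that by auto
      then have "t i \<in> {0..1}" using t0 tn by simp
      then have "linepath p q (t i) \<in> closed_segment p q" by (rule linepath_in_path)
      also have "\<dots> \<subseteq> ball 0 1" using p q by (intro closed_segment_subset) auto
      finally show ?thesis .
    qed
    have "0 \<le> sqrt (mink (\<sigma> i - \<sigma> (Suc i)) (\<sigma> i - \<sigma> (Suc i)))" if "i < n" for i
    proof -
      have "mink (\<sigma> i - \<sigma> (Suc i)) (\<sigma> i - \<sigma> (Suc i)) \<ge> 0"
        using sp inb[of i] inb[of "Suc i"] s that by auto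
      then show ?thesis by simp
    qed
    then show "0 \<le> x" unfolding x by (intro sum_nonneg) auto
  qed
qed


lemma const_ge5: "5 \<le> 2 * sqrt 2 / (1 - tanh (1::real))"
proof -
  define e where "e = exp (-2::real)"
  have e0: "e > 0" by (simp add: e_def)
  have e2: "exp (1::real) \<ge> 2" using exp_ge_add_one_self[of "1::real"] by simp
  have "(2::real) * 2 \<le> exp 1 * exp 1" by (rule mult_mono[OF e2 e2]) auto
  then have "exp (1::real) * exp 1 \<ge> 4" by simp
  then have "exp (2::real) \<ge> 4" by (simp add: exp_add[symmetric])
  then have e4: "e \<le> 1/4" unfolding e_def by (simp add: exp_minus field_simps)
  have t: "tanh (1::real) = (1 - e) / (1 + e)" by (simp add: tanh_real_altdef e_def)
  have "1 - tanh (1::real) = 2*e/(1+e)" using e0 by (simp add: t field_simps)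
  also have "\<dots> \<le> 2*e" using e0 by (simp add: field_simps)
  also have "\<dots> \<le> 1/2" using e4 by simp
  finally have t1: "1 - tanh (1::real) \<le> 1/2" .
  have t0: "1 - tanh (1::real) > 0" using e0 by (simp add: \<open>1 - tanh 1 = 2*e/(1+e)\<close>)
  have s2: "sqrt 2 \<ge> (5/4::real)" by (rule real_le_rsqrt) (simp add: power2_eq_square)
  have "5 \<le> 2 * sqrt 2 * 2" using s2 by simp
  also have "2 * sqrt 2 * 2 \<le> 2 * sqrt 2 / (1 - tanh (1::real))"
    using t0 t1 by (simp add: field_simps)
  finally show ?thesis .
qed

context vf begin

lemma width_le:
  assumes "width X = ereal W" "cmod \<eta> < 1"
  shows "phi_plus X \<eta> - phi_minus X \<eta> \<le> W * sqrt (1 - (cmod \<eta>)\<^sup>2)"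
proof -
  have "ereal ((phi_plus X \<eta> - phi_minus X \<eta>) / sqrt (1 - (cmod \<eta>)\<^sup>2)) \<le> width X"
    unfolding width_def using assms(2) by (intro SUP_upper) auto
  then have "(phi_plus X \<eta> - phi_minus X \<eta>) / sqrt (1 - (cmod \<eta>)\<^sup>2) \<le> W" using assms(1) by simp
  moreover have "sqrt (1 - (cmod \<eta>)\<^sup>2) > 0" using assms(2) by (simp add: power_less_one_iff abs_less_iff)
  ultimately show ?thesis by (simp add: divide_le_eq)
qed

lemma spM: "\<forall>\<eta>\<in>ball 0 1. \<forall>\<eta>'\<in>ball 0 1. \<forall>\<sigma>\<in>Sigma_minus X \<eta>. \<forall>\<tau>\<in>Sigma_minus X \<eta>'. mink (\<sigma>-\<tau>) (\<sigma>-\<tau>) \<ge> 0"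
proof (intro ballI)
  fix \<eta> \<eta>' \<sigma> \<tau> assume h: "\<eta> \<in> ball 0 1" "\<eta>' \<in> ball 0 1" "\<sigma> \<in> Sigma_minus X \<eta>" "\<tau> \<in> Sigma_minus X \<eta>'"
  have "mink (lift \<eta>) (\<sigma>-\<tau>) \<ge> 0" using h unfolding Sigma_minus_def by (auto simp: mink_lin)
  moreover have "mink (lift \<eta>') (\<sigma>-\<tau>) \<le> 0" using h unfolding Sigma_minus_def by (auto simp: mink_lin)
  ultimately show "mink (\<sigma>-\<tau>) (\<sigma>-\<tau>) \<ge> 0" using SPL h(1,2) by auto
qed

lemma spP: "\<forall>\<eta>\<in>ball 0 1. \<forall>\<eta>'\<in>ball 0 1. \<forall>\<sigma>\<in>Sigma_plus X \<eta>. \<forall>\<tau>\<in>Sigma_plus X \<eta>'. mink (\<sigma>-\<tau>) (\<sigma>-\<tau>) \<ge> 0"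
proof (intro ballI)
  fix \<eta> \<eta>' \<sigma> \<tau> assume h: "\<eta> \<in> ball 0 1" "\<eta>' \<in> ball 0 1" "\<sigma> \<in> Sigma_plus X \<eta>" "\<tau> \<in> Sigma_plus X \<eta>'"
  have "mink (lift \<eta>) (\<sigma>-\<tau>) \<le> 0" using h unfolding Sigma_plus_def by (auto simp: mink_lin)
  moreover have "mink (lift \<eta>') (\<sigma>-\<tau>) \<ge> 0" using h unfolding Sigma_plus_def by (auto simp: mink_lin)
  ultimately show "mink (\<sigma>-\<tau>) (\<sigma>-\<tau>) \<ge> 0" using SPL[of \<eta>' \<eta>] h(1,2) by auto
qed

lemma main_est:
  assumes W: "width X = ereal W" and p: "p \<in> ball 0 1" and q: "q \<in> ball 0 1" and k: "kdist p q = 1"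
  shows "W \<ge> 0"
    and "\<exists>\<sigma>p\<in>Sigma_minus X p. \<exists>\<sigma>q\<in>Sigma_minus X q. sqrt (mink (\<sigma>p-\<sigma>q) (\<sigma>p-\<sigma>q)) \<le> 5 * W"
    and "\<exists>\<sigma>p\<in>Sigma_plus X p. \<exists>\<sigma>q\<in>Sigma_plus X q. sqrt (mink (\<sigma>p-\<sigma>q) (\<sigma>p-\<sigma>q)) \<le> 5 * W"
proof -
  have p1: "cmod p < 1" and q1: "cmod q < 1" using p q by auto
  obtain \<sigma>p where \<sigma>p: "\<sigma>p \<in> Fset (phiX X)" "mink (lift p) \<sigma>p = phi_minus X p" using PM2[OF p1] by blast
  obtain \<sigma>q where \<sigma>q: "\<sigma>q \<in> Fset (phiX X)" "mink (lift q) \<sigma>q = phi_minus X q" using PM2[OF q1] by blast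
  obtain \<tau>p where \<tau>p: "\<tau>p \<in> Gset (phiX X)" "mink (lift p) \<tau>p = phi_plus X p" using PP2[OF p1] by blast
  obtain \<tau>q where \<tau>q: "\<tau>q \<in> Gset (phiX X)" "mink (lift q) \<tau>q = phi_plus X q" using PP2[OF q1] by blast
  define u where "u = \<tau>p - \<sigma>p"
  define v where "v = \<tau>q - \<sigma>q"
  have pu: "pc u" unfolding u_def using pc_GF \<sigma>p \<tau>p by blast
  have pv: "pc v" unfolding v_def using pc_GF \<sigma>q \<tau>q by blast
  have pqp: "pc (\<tau>q - \<sigma>p)" using pc_GF \<sigma>p \<tau>q by blast
  have ppq: "pc (\<tau>p - \<sigma>q)" using pc_GF \<sigma>q \<tau>p by blast
  have hu: "mink (lift p) u \<le> W * sqrt (1 - (cmod p)\<^sup>2)"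
    using width_le[OF W p1] \<sigma>p \<tau>p by (simp add: u_def mink_lin)
  have hv: "mink (lift q) v \<le> W * sqrt (1 - (cmod q)\<^sup>2)"
    using width_le[OF W q1] \<sigma>q \<tau>q by (simp add: v_def mink_lin)
  have L: "- mink (u+v) (u+v) \<le> 25 * W\<^sup>2" by (rule L2[OF p1 q1 k pu pv hu hv])
  show W0: "W \<ge> 0"
  proof -
    have "mink (lift p) u \<ge> 0" using FP[OF pu] p1 by simp
    moreover have "sqrt (1 - (cmod p)\<^sup>2) > 0" using p1 by (simp add: power_less_one_iff abs_less_iff)
    ultimately show ?thesis using hu
    proof -
      assume a: "mink (lift p) u \<ge> 0" "sqrt (1 - (cmod p)\<^sup>2) > 0"
      show ?thesis
      proof (rule ccontr)
        assume "\<not> W \<ge> 0"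
        then have "W * sqrt (1 - (cmod p)\<^sup>2) < 0" using a(2) by (simp add: mult_neg_pos)
        then show False using a(1) hu by linarith
      qed
    qed
  qed
  have fin: "sqrt (mink d d) \<le> 5 * W" if "mink d d \<le> 25 * W\<^sup>2" for d
  proof -
    have "sqrt (mink d d) \<le> sqrt ((5*W)\<^sup>2)" using that by (intro real_sqrt_le_mono) (simp add: power_mult_distrib)
    also have "\<dots> = 5 * W" by (rule real_sqrt_unique) (use W0 in auto)
    finally show ?thesis .
  qed
  show "\<exists>\<sigma>p\<in>Sigma_minus X p. \<exists>\<sigma>q\<in>Sigma_minus X q. sqrt (mink (\<sigma>p-\<sigma>q) (\<sigma>p-\<sigma>q)) \<le> 5 * W"
  proof (intro bexI)
    have "mink (\<sigma>p-\<sigma>q) (\<sigma>p-\<sigma>q) \<le> - mink (v+u) (v+u)"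
    proof (rule L1)
      show "pc v" "pc u" by (fact pv, fact pu)
      show "pc (v - (\<sigma>p - \<sigma>q))" using pqp by (simp add: v_def algebra_simps)
      show "pc (u + (\<sigma>p - \<sigma>q))" using ppq by (simp add: u_def algebra_simps)
    qed
    then show "sqrt (mink (\<sigma>p-\<sigma>q) (\<sigma>p-\<sigma>q)) \<le> 5 * W" using L fin by (simp add: add.commute)
    show "\<sigma>p \<in> Sigma_minus X p" using SigM[OF p1 \<sigma>p] .
    show "\<sigma>q \<in> Sigma_minus X q" using SigM[OF q1 \<sigma>q] .
  qed
  show "\<exists>\<sigma>p\<in>Sigma_plus X p. \<exists>\<sigma>q\<in>Sigma_plus X q. sqrt (mink (\<sigma>p-\<sigma>q) (\<sigma>p-\<sigma>q)) \<le> 5 * W"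
  proof (intro bexI)
    have "mink (\<tau>p-\<tau>q) (\<tau>p-\<tau>q) \<le> - mink (u+v) (u+v)"
    proof (rule L1)
      show "pc u" "pc v" by (fact pu, fact pv)
      show "pc (u - (\<tau>p - \<tau>q))" using pqp by (simp add: u_def algebra_simps)
      show "pc (v + (\<tau>p - \<tau>q))" using ppq by (simp add: v_def algebra_simps)
    qed
    then show "sqrt (mink (\<tau>p-\<tau>q) (\<tau>p-\<tau>q)) \<le> 5 * W" using L fin by simp
    show "\<tau>p \<in> Sigma_plus X p" using SigP[OF p1 \<tau>p] .
    show "\<tau>q \<in> Sigma_plus X q" using SigP[OF q1 \<tau>q] .
  qed
qed

end

theorem proposition6p3:
  fixes X :: "complex \<Rightarrow> complex"
  assumes "continuous_on (sphere 0 1) X"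
    and "tangent_field X"
    and "width X < \<infinity>"
  shows "thurston_norm (phi_minus X) (Sigma_minus X)
           \<le> ereal (2 * sqrt 2 / (1 - tanh 1)) * width X
       \<and> thurston_norm (phi_plus X) (Sigma_plus X)
           \<le> ereal (2 * sqrt 2 / (1 - tanh 1)) * width X"
proof -
  interpret vf X using assms(1) by unfold_locales
  define C where "C = 2 * sqrt 2 / (1 - tanh (1::real))"
  have C5: "5 \<le> C" unfolding C_def by (rule const_ge5)
  have "ereal ((phi_plus X 0 - phi_minus X 0) / sqrt (1 - (cmod 0)\<^sup>2)) \<le> width X"
    unfolding width_def by (intro SUP_upper) auto
  then have "width X \<noteq> -\<infinity>" by auto
  then obtain W where W: "width X = ereal W" using assms(3) by (cases "width X") auto
  let ?S = "{(p, q). p \<in> ball 0 1 \<and> q \<in> ball 0 1 \<and> kdist p q = 1}"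
  have key: "lam \<Sigma> (linepath (fst pq) (snd pq)) \<le> C * W"
    if sp: "\<forall>\<eta>\<in>ball 0 1. \<forall>\<eta>'\<in>ball 0 1. \<forall>\<sigma>\<in>\<Sigma> \<eta>. \<forall>\<tau>\<in>\<Sigma> \<eta>'. mink (\<sigma>-\<tau>) (\<sigma>-\<tau>) \<ge> 0"
      and ex: "\<And>p q. p \<in> ball 0 1 \<Longrightarrow> q \<in> ball 0 1 \<Longrightarrow> kdist p q = 1 \<Longrightarrow>
           \<exists>\<sigma>p\<in>\<Sigma> p. \<exists>\<sigma>q\<in>\<Sigma> q. sqrt (mink (\<sigma>p-\<sigma>q) (\<sigma>p-\<sigma>q)) \<le> 5 * W"
      and pq: "pq \<in> ?S" for \<Sigma> pq
  proof -
    obtain p q where pq': "pq = (p,q)" "p \<in> ball 0 1" "q \<in> ball 0 1" "kdist p q = 1" using pq by auto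
    have W0: "W \<ge> 0" using main_est(1)[OF W pq'(2,3,4)] .
    obtain \<sigma>p \<sigma>q where "\<sigma>p \<in> \<Sigma> p" "\<sigma>q \<in> \<Sigma> q" "sqrt (mink (\<sigma>p-\<sigma>q) (\<sigma>p-\<sigma>q)) \<le> 5 * W"
      using ex[OF pq'(2,3,4)] by blast
    then have "lam \<Sigma> (linepath p q) \<le> 5 * W" using lam_bound[OF sp pq'(2,3)] by blast
    also have "5 * W \<le> C * W" using C5 W0 by (intro mult_right_mono) auto
    finally show ?thesis using pq' by simp
  qed
  have "thurston_norm (phi_minus X) (Sigma_minus X) \<le> ereal (C * W)"
    unfolding thurston_norm_def
  proof (rule SUP_least)
    fix pq assume "pq \<in> {(p, q). p \<in> ball 0 1 \<and> q \<in> ball 0 1 \<and> kdist p q = 1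
                \<and> transverse (leaves (phi_minus X) (Sigma_minus X)) (closed_segment p q)}"
    then have "pq \<in> ?S" by auto
    have "lam (Sigma_minus X) (linepath (fst pq) (snd pq)) \<le> C * W"
      by (rule key[OF spM main_est(2)[OF W] \<open>pq \<in> ?S\<close>])
    then show "ereal (lam (Sigma_minus X) (linepath (fst pq) (snd pq))) \<le> ereal (C * W)"
      by simp
  qed
  moreover have "thurston_norm (phi_plus X) (Sigma_plus X) \<le> ereal (C * W)"
    unfolding thurston_norm_def
  proof (rule SUP_least)
    fix pq assume "pq \<in> {(p, q). p \<in> ball 0 1 \<and> q \<in> ball 0 1 \<and> kdist p q = 1
                \<and> transverse (leaves (phi_plus X) (Sigma_plus X)) (closed_segment p q)}"
    then have "pq \<in> ?S" by auto
    have "lam (Sigma_plus X) (linepath (fst pq) (snd pq)) \<le> C * W"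
      by (rule key[OF spP main_est(3)[OF W] \<open>pq \<in> ?S\<close>])
    then show "ereal (lam (Sigma_plus X) (linepath (fst pq) (snd pq))) \<le> ereal (C * W)"
      by simp
  qed
  ultimately show ?thesis using W by (simp add: C_def)
qed

end
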